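(* Consider a monodromic hyperbolic polycycle of a planar vector field, perturbed in a one-parameter family (parameter $\varepsilon\ge 0$) in which only one separatrix connection is broken (with nonzero speed), and suppose there is an external saddle one of whose separatrices winds onto the polycycle from its monodromic side. Let $\Lambda(\varepsilon)$ be the product of the characteristic numbers of the saddles of the polycycle, assumed irrational at $\varepsilon=0$, with $\Lambda:=\Lambda(0)<1$. Suppose that, in a canonical chart $x$ on a semitransversal $\Gamma_+$, the monodromy map has the form $f_\varepsilon(x)=Cx^{\Lambda(\varepsilon)}+\varepsilon(1+\psi(x^{\Lambda(\varepsilon)},\varepsilon))$ with $\psi$ continuous and $\psi(0,0)=0$, and let $B(\varepsilon)$ be the coordinate of the last intersection of the separatrix of the external saddle with $\Gamma_+$, $B=B(0)$. Let $\varepsilon_n\to 0$ be the parameter values corresponding to separatrix connections with the external saddle, given by $f^{n+1}_{\varepsilon_n}(0)=B(\varepsilon_n)$. Then $$\ln(-\ln\varepsilon_n)=-n\ln\Lambda+\beta+\theta\Lambda^n+R_n,$$ where $\beta=\ln\bigl(\frac{1}{1-\Lambda}\ln C-\ln B\bigr)$, $\theta=-\bigl(\frac{\ln C}{1-\Lambda}-\ln B\bigr)^{-1}\frac{\ln C}{1-\Lambda}$, and $R_n=o(\Lambda^n)$ as $n\to+\infty$.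
   Context: The characteristic number of a hyperbolic saddle with eigenvalues $\lambda_-<0<\lambda_+$ is $-\lambda_-/\lambda_+$. The coordinate $x$ on $\Gamma_+$ has $x=0$ at the polycycle; the point $x=0$ for $\varepsilon>0$ lies on the separatrix that formed the broken connection, and $\varepsilon>0$ corresponds to that separatrix entering the monodromic side. *)

theory Defs
  imports Complex_Main "HOL-Library.Landau_Symbols"
begin

definition monodromy_map ::
  "real \<Rightarrow> (real \<Rightarrow> real) \<Rightarrow> (real \<Rightarrow> real \<Rightarrow> real) \<Rightarrow> real \<Rightarrow> real \<Rightarrow> real" where
  "monodromy_map C Lam psi eps x = C * x powr Lam eps + eps * (1 + psi (x powr Lam eps) eps)"

end

theory Submission imports Defs "HOL-Analysis.Analysis" "HOL-Real_Asymp.Real_Asymp" begin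


lemma SE1: "(q::real) > 1 \<Longrightarrow> d > 0 \<Longrightarrow> L > 0 \<Longrightarrow> (\<lambda>n::nat. real n * exp (-d*q^n) / L^n) \<longlonglongrightarrow> 0"
  by real_asymp
lemma SE2: "(q::real) > 1 \<Longrightarrow> d > 0 \<Longrightarrow> L > 0 \<Longrightarrow> (\<lambda>n::nat. exp (-d*q^n) / L^n) \<longlonglongrightarrow> 0"
  by real_asymp

lemma comp0:
  fixes f g :: "nat \<Rightarrow> real"
  assumes "g \<longlonglongrightarrow> 0" "eventually (\<lambda>n. \<bar>f n\<bar> \<le> g n) sequentially"
  shows "f \<longlonglongrightarrow> 0"
  using assms(1) by (rule tendsto_0_le[where K=1]) (use assms(2) in \<open>auto elim: eventually_mono\<close>)

lemma deriv_seq: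
  fixes \<phi> :: "real \<Rightarrow> real" and e w :: "nat \<Rightarrow> real"
  assumes d: "\<phi> differentiable (at 0 within {0..})" and ep: "\<forall>n. e n > 0" and e0: "e \<longlonglongrightarrow> 0"
    and we: "(\<lambda>n. w n * e n) \<longlonglongrightarrow> 0"
  shows "(\<lambda>n. w n * (\<phi> (e n) - \<phi> 0)) \<longlonglongrightarrow> 0"
proof -
  obtain D where D: "(\<phi> has_real_derivative D) (at 0 within {0..})"
    using d real_differentiable_def by blast
  hence lim: "((\<lambda>y. (\<phi> y - \<phi> 0) / (y - 0)) \<longlongrightarrow> D) (at 0 within {0..})"
    using has_field_derivative_iff by blast
  have fl: "filterlim e (at 0 within {0..}) sequentially"
  proof -
    have "\<forall>n. e n \<in> {0..} \<and> e n \<noteq> 0" using ep by (metis atLeast_iff less_imp_le less_irrefl)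
    hence "eventually (\<lambda>n. e n \<in> {0..} \<and> e n \<noteq> 0) sequentially" by (simp add: always_eventually)
    thus ?thesis unfolding filterlim_at using e0 by simp
  qed
  have "(\<lambda>n. (\<phi> (e n) - \<phi> 0) / (e n - 0)) \<longlonglongrightarrow> D"
    using filterlim_compose[OF lim fl] by simp
  hence "(\<lambda>n. (w n * e n) * ((\<phi> (e n) - \<phi> 0) / (e n - 0))) \<longlonglongrightarrow> 0 * D"
    using we by (intro tendsto_mult)
  moreover have "\<And>n. (w n * e n) * ((\<phi> (e n) - \<phi> 0) / (e n - 0)) = w n * (\<phi> (e n) - \<phi> 0)"
    using ep by (simp add: less_imp_neq[symmetric] field_simps)
  ultimately show ?thesis by simp
qed

lemma ln_bound:
  fixes t :: real assumes "\<bar>t\<bar> \<le> 1/2" shows "\<bar>ln (1 + t)\<bar> \<le> 2 * \<bar>t\<bar>"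
proof -
  have "\<bar>ln (1 + t) - t\<bar> \<le> 2 * t\<^sup>2" using abs_ln_one_plus_x_minus_x_bound assms by blast
  moreover have "2 * t\<^sup>2 \<le> \<bar>t\<bar>"
  proof -
    have "2 * t\<^sup>2 = (2*\<bar>t\<bar>) * \<bar>t\<bar>" by (simp add: power2_eq_square abs_mult_self)
    also have "\<dots> \<le> 1 * \<bar>t\<bar>" using assms by (intro mult_right_mono) auto
    finally show ?thesis by simp
  qed
  ultimately show ?thesis by linarith
qed


lemma iter_est:
  fixes C l e M R :: real and psi :: "real \<Rightarrow> real \<Rightarrow> real"
  defines "g \<equiv> \<lambda>x. C * x powr l + e * (1 + psi (x powr l) e)"
  defines "r \<equiv> e*(1+M)/(C*(e/2) powr l)"
  assumes Cp: "C>0" and ep: "e>0" and lp: "0<l" and l1: "l<1" and R1: "R\<ge>1" and M0: "M\<ge>0"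
    and psiM: "\<forall>u\<in>{0..R}. \<bar>psi u e\<bar> \<le> M"
    and CR: "C * R powr l + e*(1+M) \<le> R"
    and p0: "\<bar>psi 0 e\<bar> \<le> 1/2"
    and r2: "r \<le> 1/2"
  shows "(g^^(k+1)) 0 \<in> {e/2..R} \<and> \<bar>ln ((g^^(k+1)) 0) - (ln C*(1-l^k)/(1-l) + l^k * ln (g 0))\<bar> \<le> 2*r/(1-l)"
proof -
  have rpos: "r \<ge> 0" unfolding r_def using Cp ep M0 by simp
  have e2p: "(e/2) powr l > 0" using ep by simp
  have step: "g x \<in> {e/2..R} \<and> \<bar>ln (g x) - (ln C + l * ln x)\<bar> \<le> 2*r" if x: "x \<in> {e/2..R}" for x
  proof -
    have xp: "x > 0" using x ep by auto
    define xl where "xl = x powr l"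
    have xlp: "xl > 0" unfolding xl_def using xp by simp
    have "xl \<le> R powr l" unfolding xl_def using x xp lp by (intro powr_mono2) auto
    also have "R powr l \<le> R powr 1" using R1 l1 by (intro powr_mono) auto
    finally have xlR: "xl \<le> R" using R1 by simp
    have ps: "\<bar>psi xl e\<bar> \<le> M" using psiM xlp xlR by auto
    have xlge: "(e/2) powr l \<le> xl" unfolding xl_def using x ep lp by (intro powr_mono2) auto
    have key: "e*(1+M) \<le> C*(e/2) powr l / 2"
      using r2 Cp e2p unfolding r_def by (simp add: field_simps)
    have gx: "g x = C * xl + e * (1 + psi xl e)" unfolding g_def xl_def by simp
    have up: "g x \<le> R"
    proof -
      have "C * xl \<le> C * R powr l" using \<open>xl \<le> R powr l\<close> Cp by simp
      moreover have "e * (1 + psi xl e) \<le> e * (1+M)" using ps ep by (intro mult_left_mono) auto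
      ultimately show ?thesis using gx CR by linarith
    qed
    have lo1: "e * (1 + psi xl e) \<ge> - (e * (1+M))"
    proof -
      have "e * (1 + psi xl e) \<ge> e * (1 - M)" using ps ep by (intro mult_left_mono) auto
      moreover have "e * (1 - M) \<ge> - (e*(1+M))" using ep by (simp add: algebra_simps)
      ultimately show ?thesis by linarith
    qed
    have "C*(e/2) powr l \<le> C * xl" using xlge Cp by simp
    moreover have "e*(1+M) \<ge> e/2" using ep M0 by (simp add: algebra_simps)
    ultimately have lo: "g x \<ge> e/2" using gx lo1 key by linarith
    define t where "t = e * (1 + psi xl e) / (C * xl)"
    have Cxl: "C * xl > 0" using Cp xlp by simp
    have gt: "g x = C * xl * (1 + t)" unfolding t_def gx using Cp xlp by (simp add: field_simps)
    have "\<bar>t\<bar> = \<bar>e * (1 + psi xl e)\<bar> / (C * xl)" unfolding t_def using Cxl by (simp add: abs_div)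
    also have "\<dots> \<le> e * (1+M) / (C * xl)"
      using ps ep Cxl by (intro divide_right_mono) (auto simp: abs_mult)
    also have "\<dots> \<le> e * (1+M) / (C*(e/2) powr l)"
      using xlge Cp e2p ep M0 xlp by (intro divide_left_mono) auto
    finally have tr: "\<bar>t\<bar> \<le> r" unfolding r_def .
    have "1 + t > 0" using tr r2 by linarith
    hence "ln (g x) = ln C + ln xl + ln (1 + t)" using gt Cp xlp by (simp add: ln_mult)
    also have "ln xl = l * ln x" unfolding xl_def using xp by (simp add: ln_powr)
    finally have "ln (g x) - (ln C + l * ln x) = ln (1+t)" by simp
    moreover have "\<bar>ln (1+t)\<bar> \<le> 2 * \<bar>t\<bar>" using tr r2 by (intro ln_bound) linarith
    ultimately show ?thesis using up lo tr by auto
  qed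
  show ?thesis
  proof (induction k)
    case 0
    have g0: "g 0 = e * (1 + psi 0 e)" unfolding g_def by simp
    have "\<bar>psi 0 e\<bar> \<le> M" using psiM R1 by auto
    hence "g 0 \<le> e * (1+M)" using g0 ep by (simp add: mult_left_mono)
    moreover have "C * R powr l \<ge> 0" using Cp by simp
    moreover have "e * (1/2) \<le> e * (1 + psi 0 e)" using p0 ep by (intro mult_left_mono) auto
    hence "g 0 \<ge> e/2" using g0 by simp
    ultimately show ?case using CR rpos l1 by auto
  next
    case (Suc k)
    define x where "x = (g^^(k+1)) 0"
    have xs: "x \<in> {e/2..R}" using Suc x_def by blast
    have IH: "\<bar>ln x - (ln C*(1-l^k)/(1-l) + l^k * ln (g 0))\<bar> \<le> 2*r/(1-l)" using Suc x_def by blast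
    have eq: "(g^^(Suc k+1)) 0 = g x" unfolding x_def by simp
    from step[OF xs] have s1: "g x \<in> {e/2..R}" and s2: "\<bar>ln (g x) - (ln C + l * ln x)\<bar> \<le> 2*r" by auto
    have T: "ln C*(1-l^Suc k)/(1-l) + l^Suc k * ln (g 0) = ln C + l * (ln C*(1-l^k)/(1-l) + l^k * ln (g 0))"
      using l1 by (simp add: field_simps)
    have "\<bar>l * (ln x - (ln C*(1-l^k)/(1-l) + l^k * ln (g 0)))\<bar> \<le> l * (2*r/(1-l))"
      unfolding abs_mult using IH lp by (simp only: abs_of_pos) (intro mult_left_mono, auto)
    moreover have "ln (g x) - (ln C + l * (ln C*(1-l^k)/(1-l) + l^k * ln (g 0)))
       = (ln (g x) - (ln C + l * ln x)) + l * (ln x - (ln C*(1-l^k)/(1-l) + l^k * ln (g 0)))"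
      by (simp add: algebra_simps)
    ultimately have "\<bar>ln (g x) - (ln C*(1-l^Suc k)/(1-l) + l^Suc k * ln (g 0))\<bar> \<le> l * (2*r/(1-l)) + 2*r"
      using s2 unfolding T
      using abs_triangle_ineq[of "ln (g x) - (ln C + l * ln x)" "l * (ln x - (ln C*(1-l^k)/(1-l) + l^k * ln (g 0)))"]
      by linarith
    also have "l * (2*r/(1-l)) + 2*r = 2*r/(1-l)" using l1 by (simp add: field_simps)
    finally show ?case using s1 eq by simp
  qed
qed



theorem lemma5:
  fixes C :: real
    and Lam :: "real \<Rightarrow> real"
    and psi :: "real \<Rightarrow> real \<Rightarrow> real"
    and Bf :: "real \<Rightarrow> real"
    and eps :: "nat \<Rightarrow> real"
  assumes C_pos: "C > 0"
    and Lam_pos: "0 < Lam 0" and Lam_lt1: "Lam 0 < 1" and Lam_irr: "Lam 0 \<notin> \<rat>"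
    and Lam_diff: "Lam differentiable (at 0 within {0..})"
    and B_pos: "Bf 0 > 0"
    and B_diff: "Bf differentiable (at 0 within {0..})"
    and B_inside: "ln (Bf 0) < ln C / (1 - Lam 0)"
    and psi_cont: "continuous_on ({0..} \<times> {0..}) (\<lambda>(u, e). psi u e)"
    and psi_00: "psi 0 0 = 0"
    and eps_nonneg: "\<forall>n. eps n \<ge> 0"
    and eps_lim: "eps \<longlonglongrightarrow> 0"
    and connection: "\<forall>n. (monodromy_map C Lam psi (eps n) ^^ (n + 1)) 0 = Bf (eps n)"
  shows "(\<lambda>n. ln (- ln (eps n))
            - (- real n * ln (Lam 0)
               + ln (ln C / (1 - Lam 0) - ln (Bf 0))
               + (- inverse (ln C / (1 - Lam 0) - ln (Bf 0)) * (ln C / (1 - Lam 0))) * Lam 0 ^ n))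
         \<in> o(\<lambda>n. Lam 0 ^ n)"
proof -
  define L where "L = Lam 0"
  define l where "l = (\<lambda>n. Lam (eps n))"
  define a where "a = ln C / (1 - L)"
  define K where "K = a - ln (Bf 0)"
  define lam1 where "lam1 = (1 + L) / 2"
  define an where "an = (\<lambda>n. ln C / (1 - l n))"
  define lB where "lB = (\<lambda>n. ln (Bf (eps n)))"
  define p where "p = (\<lambda>n. ln (1 + psi 0 (eps n)))"
  have L0: "0 < L" and L1: "L < 1" using Lam_pos Lam_lt1 by (auto simp: L_def)
  have Kp: "K > 0" using B_inside by (simp add: K_def a_def L_def)
  have lam1p: "0 < lam1" "L < lam1" "lam1 < 1" using L0 L1 by (auto simp: lam1_def)
  have epos: "\<forall>n. eps n > 0"
  proof
    fix n show "eps n > 0"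
    proof (rule ccontr)
      assume "\<not> eps n > 0"
      hence e0: "eps n = 0" using eps_nonneg by (metis less_eq_real_def)
      have mm: "monodromy_map C Lam psi 0 = (\<lambda>x. C * x powr Lam 0)" by (auto simp: monodromy_map_def)
      have "(monodromy_map C Lam psi 0 ^^ k) 0 = 0" for k
        unfolding mm by (induction k) auto
      hence "Bf 0 = 0" using connection e0 by metis
      with B_pos show False by simp
    qed
  qed
  have lim1: "(\<lambda>n. \<phi> (eps n)) \<longlonglongrightarrow> \<phi> 0" if "\<phi> differentiable (at 0 within {0..})" for \<phi> :: "real \<Rightarrow> real"
  proof -
    have "(\<lambda>n. 1 * (\<phi> (eps n) - \<phi> 0)) \<longlonglongrightarrow> 0"
      by (rule deriv_seq[OF that epos eps_lim]) (use eps_lim in simp)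
    thus ?thesis by (simp add: LIM_zero_iff)
  qed
  have dlnB: "(\<lambda>y. ln (Bf y)) differentiable (at 0 within {0..})"
    by (rule differentiable_compose[OF _ B_diff]) (use DERIV_ln[OF B_pos] real_differentiable_def in blast)
  have dlnL: "(\<lambda>y. ln (Lam y)) differentiable (at 0 within {0..})"
    by (rule differentiable_compose[OF _ Lam_diff]) (use DERIV_ln[OF Lam_pos] real_differentiable_def in blast)
  have da: "(\<lambda>y. ln C / (1 - Lam y)) differentiable (at 0 within {0..})"
    by (intro differentiable_divide differentiable_diff differentiable_const Lam_diff) (use Lam_lt1 in simp)
  have lL: "l \<longlonglongrightarrow> L" unfolding l_def L_def by (rule lim1[OF Lam_diff])
  have lan: "an \<longlonglongrightarrow> a" unfolding an_def a_def l_def L_def by (rule lim1[OF da])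
  have llB: "lB \<longlonglongrightarrow> ln (Bf 0)" unfolding lB_def by (rule lim1[OF dlnB])
  have psi0: "(\<lambda>n. psi 0 (eps n)) \<longlonglongrightarrow> 0"
  proof -
    have "(\<lambda>n. (\<lambda>(u,e). psi u e) (0, eps n)) \<longlonglongrightarrow> (\<lambda>(u,e). psi u e) (0, 0)"
      by (rule continuous_on_tendsto_compose[OF psi_cont])
         (auto intro!: tendsto_Pair eps_lim always_eventually simp: eps_nonneg)
    thus ?thesis using psi_00 by simp
  qed
  have pl: "p \<longlonglongrightarrow> 0"
  proof -
    have "(\<lambda>n. ln (1 + psi 0 (eps n))) \<longlonglongrightarrow> ln (1 + 0)"
      by (intro tendsto_ln tendsto_add tendsto_const psi0) simp
    thus ?thesis by (simp add: p_def)
  qed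
  define R where "R = (C+1) powr (1/(1-L))"
  have Rpos: "R > 0" unfolding R_def using C_pos by simp
  have R1: "R \<ge> 1" unfolding R_def using C_pos L1 by (intro ge_one_powr_ge_zero) auto
  have RC: "C * R powr L < R"
  proof -
    have a1: "R powr (1-L) = C+1" unfolding R_def using C_pos L1 by (simp add: powr_powr)
    have "R = R powr L * R powr (1-L)" using Rpos by (simp add: powr_add[symmetric])
    also have "\<dots> = R powr L * (C+1)" using a1 by simp
    finally have "R = R powr L * (C+1)" .
    hence "R = R powr L + C * R powr L" by (simp add: algebra_simps)
    moreover have "R powr L > 0" using Rpos by simp
    ultimately show ?thesis by linarith
  qed
  obtain M where M0: "M \<ge> 0" and Mb: "\<And>u e. u \<in> {0..R} \<Longrightarrow> e \<in> {0..1} \<Longrightarrow> \<bar>psi u e\<bar> \<le> M"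
  proof -
    have cs: "compact ({0..R} \<times> {0..(1::real)})" by (intro compact_Times compact_Icc)
    have ne: "{0..R} \<times> {0..(1::real)} \<noteq> {}" using Rpos by auto
    have "continuous_on ({0..R} \<times> {0..(1::real)}) (\<lambda>z. (\<lambda>(u, e). psi u e) z)"
      by (rule continuous_on_subset[OF psi_cont]) auto
    hence "continuous_on ({0..R} \<times> {0..(1::real)}) (\<lambda>z. \<bar>(\<lambda>(u, e). psi u e) z\<bar>)"
      by (rule continuous_on_rabs)
    from continuous_attains_sup[OF cs ne this] obtain z where
      z: "\<forall>y\<in>{0..R} \<times> {0..(1::real)}. \<bar>(\<lambda>(u, e). psi u e) y\<bar> \<le> \<bar>(\<lambda>(u, e). psi u e) z\<bar>" by blast
    show ?thesis
      by (rule that[of "\<bar>(\<lambda>(u, e). psi u e) z\<bar>"]) (use z in force)+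
  qed
  define r where "r = (\<lambda>n. eps n*(1+M)/(C*(eps n/2) powr l n))"
  have r_eq: "r n = (1+M)/C * 2 powr l n * eps n powr (1 - l n)" for n
  proof -
    have e: "eps n > 0" using epos by simp
    have h1: "(eps n/2) powr l n = eps n powr l n / 2 powr l n" using e by (simp add: powr_divide)
    have h2: "eps n powr (1 - l n) = eps n / eps n powr l n" using e by (simp add: powr_diff)
    have p1: "eps n powr l n > 0" "2 powr l n > 0" using e by auto
    have "r n = eps n*(1+M)/(C*(eps n powr l n / 2 powr l n))" unfolding r_def h1 ..
    also have "\<dots> = (1+M)/C * 2 powr l n * (eps n / eps n powr l n)"
      using p1 C_pos by (simp add: field_simps)
    finally show ?thesis using h2 by simp
  qed
  have rlim: "r \<longlonglongrightarrow> 0"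
  proof -
    have "(\<lambda>n. eps n powr (1 - l n)) \<longlonglongrightarrow> 0"
      by (rule tendsto_zero_powrI[OF eps_lim tendsto_diff[OF tendsto_const lL]])
         (use eps_nonneg L1 in \<open>auto intro: always_eventually\<close>)
    hence "(\<lambda>n. (1+M)/C * 2 powr l n * eps n powr (1 - l n)) \<longlonglongrightarrow> (1+M)/C * 2 powr L * 0"
      by (intro tendsto_mult tendsto_const tendsto_powr lL) auto
    thus ?thesis by (simp add: r_eq[abs_def])
  qed
  have ev_e1: "eventually (\<lambda>n. eps n < 1) sequentially" using order_tendstoD(2)[OF eps_lim, of 1] by simp
  have ev_lpos: "eventually (\<lambda>n. l n > 0) sequentially" using order_tendstoD(1)[OF lL L0] .
  have ev_llam: "eventually (\<lambda>n. l n < lam1) sequentially" using order_tendstoD(2)[OF lL lam1p(2)] .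
  have ev_p0: "eventually (\<lambda>n. \<bar>psi 0 (eps n)\<bar> < 1/2) sequentially"
    using order_tendstoD(2)[OF tendsto_rabs_zero[OF psi0], of "1/2"] by simp
  have ev_CR: "eventually (\<lambda>n. C * R powr l n + eps n * (1+M) < R) sequentially"
  proof -
    have "(\<lambda>n. C * R powr l n + eps n * (1+M)) \<longlonglongrightarrow> C * R powr L + 0 * (1+M)"
      using Rpos by (intro tendsto_add tendsto_mult tendsto_const tendsto_powr lL eps_lim) auto
    from order_tendstoD(2)[OF this] RC show ?thesis by simp
  qed
  have ev_r: "eventually (\<lambda>n. r n < 1/2) sequentially" using order_tendstoD(2)[OF rlim, of "1/2"] by simp
  define E where "E = (\<lambda>n. lB n - (ln C*(1-l n^n)/(1-l n) + l n^n*(ln (eps n) + p n)))"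
  have ev_iter: "eventually (\<lambda>n. \<bar>E n\<bar> \<le> 2 * r n / (1 - l n)) sequentially"
    using ev_e1 ev_lpos ev_llam ev_p0 ev_CR ev_r
  proof eventually_elim
    case (elim n)
    have e: "eps n > 0" using epos by simp
    have l1: "l n < 1" using elim lam1p by simp
    have gdef: "monodromy_map C Lam psi (eps n) = (\<lambda>x. C * x powr l n + eps n * (1 + psi (x powr l n) (eps n)))"
      by (simp add: monodromy_map_def l_def fun_eq_iff)
    have psiM: "\<forall>u\<in>{0..R}. \<bar>psi u (eps n)\<bar> \<le> M" using Mb elim e by auto
    have c1: "C * R powr l n + eps n*(1+M) \<le> R" using elim by simp
    have c2: "\<bar>psi 0 (eps n)\<bar> \<le> 1/2" using elim by simp
    have c3: "eps n*(1+M)/(C*(eps n/2) powr l n) \<le> 1/2" using elim unfolding r_def by simp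
    note it = iter_est[of C "eps n" "l n" R M psi n, OF C_pos e elim(2) l1 R1 M0 psiM c1 c2 c3]
    have it2: "\<bar>ln (Bf (eps n)) - (ln C*(1-l n^n)/(1-l n) + l n^n * ln (eps n * (1 + psi 0 (eps n))))\<bar> \<le> 2 * r n / (1 - l n)"
      using it[unfolded gdef[symmetric]] connection elim unfolding r_def by simp
    have "1 + psi 0 (eps n) > 0" using elim by linarith
    hence "ln (eps n * (1 + psi 0 (eps n))) = ln (eps n) + p n" using e by (simp add: ln_mult p_def)
    thus ?case using it2 unfolding E_def lB_def by simp
  qed
  have Elim: "E \<longlonglongrightarrow> 0"
  proof (rule comp0[OF _ ev_iter])
    show "(\<lambda>n. 2 * r n / (1 - l n)) \<longlonglongrightarrow> 0"
    proof -
      have "(\<lambda>n. 2 * r n / (1 - l n)) \<longlonglongrightarrow> 2 * 0 / (1 - L)"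
        by (intro tendsto_intros rlim lL) (use L1 in simp)
      thus ?thesis by simp
    qed
  qed
  define W where "W = (\<lambda>n. - ln (eps n) * l n ^ n)"
  have ev_W: "eventually (\<lambda>n. W n = (an n - lB n) + l n^n*(p n - an n) + E n) sequentially"
    using ev_llam
  proof eventually_elim
    case (elim n)
    hence "1 - l n \<noteq> 0" using lam1p by simp
    have "c*(1-P)/(1-x) = c/(1-x) - P*(c/(1-x))" for c P x :: real
      by (simp add: diff_divide_distrib right_diff_distrib)
    thus ?case unfolding W_def an_def E_def by (simp add: algebra_simps)
  qed
  have lpow: "(\<lambda>n. l n ^ n) \<longlonglongrightarrow> 0"
  proof (rule comp0[OF LIMSEQ_power_zero[of lam1]])
    show "norm lam1 < 1" using lam1p by simp
    show "eventually (\<lambda>n. \<bar>l n ^ n\<bar> \<le> lam1 ^ n) sequentially"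
      using ev_lpos ev_llam by eventually_elim (simp add: power_mono abs_of_pos)
  qed
  have Wlim: "W \<longlonglongrightarrow> K"
  proof -
    have "(\<lambda>n. (an n - lB n) + l n^n*(p n - an n) + E n) \<longlonglongrightarrow> (a - ln (Bf 0)) + 0 * (0 - a) + 0"
      by (intro tendsto_intros lan llB lpow pl Elim)
    hence "(\<lambda>n. (an n - lB n) + l n^n*(p n - an n) + E n) \<longlonglongrightarrow> K" by (simp add: K_def)
    thus ?thesis using ev_W by (rule Lim_transform_eventually[OF _ eventually_mono]) simp
  qed
  have ev_WK: "eventually (\<lambda>n. W n > K/2) sequentially" using order_tendstoD(1)[OF Wlim, of "K/2"] Kp by simp
  define q where "q = 1 / lam1"
  have q1: "q > 1" unfolding q_def using lam1p by simp
  have ev_lne: "eventually (\<lambda>n. ln (eps n) \<le> - (K/2) * q^n) sequentially"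
    using ev_WK ev_lpos ev_llam
  proof eventually_elim
    case (elim n)
    have lp: "l n ^ n > 0" using elim by simp
    have le: "l n ^ n \<le> lam1 ^ n" using elim by (simp add: power_mono)
    have "- ln (eps n) = W n / l n ^ n" unfolding W_def using elim(2) by simp
    also have "\<dots> \<ge> (K/2) / l n ^ n" using elim lp by (intro divide_right_mono) auto
    also have "(K/2) / l n ^ n \<ge> (K/2) / lam1 ^ n" using lp le Kp by (intro divide_left_mono) auto
    also have "(K/2) / lam1 ^ n = (K/2) * q^n" unfolding q_def by (simp add: power_one_over)
    finally show ?case by simp
  qed
  have ev_eb: "eventually (\<lambda>n. eps n \<le> exp (- (K/2) * q^n)) sequentially"
    using ev_lne
  proof eventually_elim
    case (elim n)
    have "eps n = exp (ln (eps n))" using epos by simp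
    also have "\<dots> \<le> exp (- (K/2) * q^n)" using elim by simp
    finally show ?case .
  qed
  define d where "d = (1 - lam1) * (K/2)"
  have dp: "d > 0" unfolding d_def using lam1p Kp by simp
  have ev_rb: "eventually (\<lambda>n. r n \<le> 2*(1+M)/C * exp (- d * q^n)) sequentially"
    using ev_lne ev_lpos ev_llam ev_e1
  proof eventually_elim
    case (elim n)
    have e: "eps n > 0" using epos by simp
    have lne: "ln (eps n) < 0" using elim e by simp
    have "eps n powr (1 - l n) = exp ((1 - l n) * ln (eps n))" using e by (simp add: powr_def)
    also have "\<dots> \<le> exp ((1 - lam1) * ln (eps n))" using lne elim by (simp add: mult_right_mono_neg)
    also have "\<dots> \<le> exp ((1 - lam1) * (- (K/2) * q^n))"
    proof -
      have "(1 - lam1) * ln (eps n) \<le> (1 - lam1) * (- (K/2) * q^n)"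
        using elim(1) lam1p by (intro mult_left_mono) auto
      thus ?thesis by simp
    qed
    also have "(1 - lam1) * (- (K/2) * q^n) = - d * q^n" unfolding d_def by simp
    finally have h1: "eps n powr (1 - l n) \<le> exp (- d * q^n)" .
    have h2: "2 powr l n \<le> 2" using powr_mono[of "l n" 1 2] elim lam1p by simp
    have "r n = (1+M)/C * 2 powr l n * eps n powr (1 - l n)" by (rule r_eq)
    also have "\<dots> \<le> (1+M)/C * 2 * exp (- d * q^n)"
      using h1 h2 M0 C_pos by (intro mult_mono) auto
    finally show ?case by (simp add: mult.commute)
  qed
  have Ln: "L ^ n > 0" for n using L0 by simp
  have G1: "(\<lambda>n. real n * eps n / L^n) \<longlonglongrightarrow> 0"
  proof (rule comp0[OF SE1[OF q1 _ L0, of "K/2"]])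
    show "0 < K/2" using Kp by simp
    show "eventually (\<lambda>n. \<bar>real n * eps n / L^n\<bar> \<le> real n * exp (- (K/2) * q^n) / L^n) sequentially"
      using ev_eb
    proof eventually_elim
      case (elim n)
      have "\<bar>real n * eps n / L^n\<bar> = real n * eps n / L^n"
        using epos Ln[of n] by (simp add: less_imp_le)
      also have "\<dots> \<le> real n * exp (- (K/2) * q^n) / L^n"
        using elim Ln[of n] by (intro divide_right_mono mult_left_mono) auto
      finally show ?case .
    qed
  qed
  have G0: "(\<lambda>n. eps n / L^n) \<longlonglongrightarrow> 0"
  proof (rule comp0[OF SE2[OF q1 _ L0, of "K/2"]])
    show "0 < K/2" using Kp by simp
    show "eventually (\<lambda>n. \<bar>eps n / L^n\<bar> \<le> exp (- (K/2) * q^n) / L^n) sequentially"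
      using ev_eb
    proof eventually_elim
      case (elim n)
      have "\<bar>eps n / L^n\<bar> = eps n / L^n"
        using epos Ln[of n] by (simp add: less_imp_le)
      also have "\<dots> \<le> exp (- (K/2) * q^n) / L^n"
        using elim Ln[of n] by (intro divide_right_mono) auto
      finally show ?case .
    qed
  qed
  have GE: "(\<lambda>n. E n / L^n) \<longlonglongrightarrow> 0"
  proof (rule comp0)
    show "(\<lambda>n. 4*(1+M)/(C*(1-lam1)) * (exp (- d * q^n) / L^n)) \<longlonglongrightarrow> 0"
      using tendsto_mult[OF tendsto_const SE2[OF q1 dp L0], of "4*(1+M)/(C*(1-lam1))"]
      by (simp only: mult_zero_right)
    show "eventually (\<lambda>n. \<bar>E n / L^n\<bar> \<le> 4*(1+M)/(C*(1-lam1)) * (exp (- d * q^n) / L^n)) sequentially"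
      using ev_iter ev_rb ev_llam ev_r
    proof eventually_elim
      case (elim n)
      have rp: "r n \<ge> 0" unfolding r_def using epos M0 C_pos by (simp add: less_imp_le)
      have "\<bar>E n\<bar> \<le> 2 * r n / (1 - l n)" using elim by simp
      also have "\<dots> \<le> 2 * r n / (1 - lam1)" using rp elim lam1p by (intro divide_left_mono) auto
      also have "\<dots> \<le> 2 * (2*(1+M)/C * exp (- d * q^n)) / (1 - lam1)"
        using elim lam1p by (intro divide_right_mono mult_left_mono) auto
      also have "\<dots> = 4*(1+M)/(C*(1-lam1)) * exp (- d * q^n)" using lam1p by (simp add: field_simps)
      finally have "\<bar>E n\<bar> \<le> 4*(1+M)/(C*(1-lam1)) * exp (- d * q^n)" .
      hence "\<bar>E n\<bar> / L^n \<le> 4*(1+M)/(C*(1-lam1)) * exp (- d * q^n) / L^n"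
        using Ln[of n] by (intro divide_right_mono) auto
      thus ?case using Ln[of n] by (simp add: abs_div)
    qed
  qed
  have Lp0: "(\<lambda>n. L^n) \<longlonglongrightarrow> 0" by (rule LIMSEQ_power_zero) (use L0 L1 in simp)
  have Da: "(\<lambda>n. 1/L^n * (an n - a)) \<longlonglongrightarrow> 0"
  proof -
    have "(\<lambda>n. 1/L^n * (ln C / (1 - Lam (eps n)) - ln C / (1 - Lam 0))) \<longlonglongrightarrow> 0"
      by (rule deriv_seq[OF da epos eps_lim]) (use G0 in simp)
    thus ?thesis by (simp add: an_def a_def l_def L_def)
  qed
  have DB: "(\<lambda>n. 1/L^n * (lB n - ln (Bf 0))) \<longlonglongrightarrow> 0"
  proof -
    have "(\<lambda>n. 1/L^n * (ln (Bf (eps n)) - ln (Bf 0))) \<longlonglongrightarrow> 0"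
      by (rule deriv_seq[OF dlnB epos eps_lim]) (use G0 in simp)
    thus ?thesis by (simp add: lB_def)
  qed
  have Dl: "(\<lambda>n. real n/L^n * (ln (l n) - ln L)) \<longlonglongrightarrow> 0"
  proof -
    have "(\<lambda>n. real n/L^n * (ln (Lam (eps n)) - ln (Lam 0))) \<longlonglongrightarrow> 0"
      by (rule deriv_seq[OF dlnL epos eps_lim]) (use G1 in simp)
    thus ?thesis by (simp add: l_def L_def)
  qed
  have ne: "(\<lambda>n. real n * eps n) \<longlonglongrightarrow> 0"
  proof -
    have "(\<lambda>n. (real n * eps n / L^n) * L^n) \<longlonglongrightarrow> 0 * 0" by (intro tendsto_mult G1 Lp0)
    moreover have "(real n * eps n / L^n) * L^n = real n * eps n" for n using L0 by simp
    ultimately show ?thesis by simp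
  qed
  have Dn: "(\<lambda>n. real n * (ln (l n) - ln L)) \<longlonglongrightarrow> 0"
  proof -
    have "(\<lambda>n. real n * (ln (Lam (eps n)) - ln (Lam 0))) \<longlonglongrightarrow> 0"
      by (rule deriv_seq[OF dlnL epos eps_lim ne])
    thus ?thesis by (simp add: l_def L_def)
  qed
  have ratio: "(\<lambda>n. (l n / L)^n) \<longlonglongrightarrow> 1"
  proof -
    have "(\<lambda>n. exp (real n * (ln (l n) - ln L))) \<longlonglongrightarrow> exp 0" by (rule tendsto_exp[OF Dn])
    hence "(\<lambda>n. exp (real n * (ln (l n) - ln L))) \<longlonglongrightarrow> 1" by simp
    moreover have "eventually (\<lambda>n. exp (real n * (ln (l n) - ln L)) = (l n / L)^n) sequentially"
      using ev_lpos
    proof eventually_elim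
      case (elim n)
      have pos: "l n / L > 0" using elim L0 by simp
      have "exp (real n * (ln (l n) - ln L)) = exp (real n * ln (l n / L))" using elim L0 by (simp add: ln_div)
      also have "\<dots> = exp (ln ((l n / L)^n))" using pos by (simp add: ln_realpow)
      also have "\<dots> = (l n / L)^n" using pos by simp
      finally show ?case .
    qed
    ultimately show ?thesis by (rule Lim_transform_eventually)
  qed
  define Q2 where "Q2 = (\<lambda>n. (W n - K + a*L^n)/L^n)"
  have alg2: "(Wv - (a - b) + a*Ln)/Ln = 1/Ln*(anv - a) - 1/Ln*(lBv - b) + (P/Ln)*pv - ((P/Ln)*anv - a) + Ev/Ln"
    if "Ln \<noteq> 0" "Wv = (anv - lBv) + P*(pv - anv) + Ev" for Wv a b Ln anv lBv P pv Ev :: real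
    using that(1) unfolding that(2) by (simp add: field_simps)
  have Q2lim: "Q2 \<longlonglongrightarrow> 0"
  proof -
    have "(\<lambda>n. 1/L^n*(an n - a) - 1/L^n*(lB n - ln (Bf 0)) + (l n/L)^n * p n - ((l n/L)^n * an n - a) + E n/L^n)
           \<longlonglongrightarrow> 0 - 0 + 1 * 0 - (1 * a - a) + 0"
      by (intro tendsto_intros Da DB ratio pl lan GE)
    hence "(\<lambda>n. 1/L^n*(an n - a) - 1/L^n*(lB n - ln (Bf 0)) + (l n/L)^n * p n - ((l n/L)^n * an n - a) + E n/L^n)
           \<longlonglongrightarrow> 0" by simp
    moreover have "eventually (\<lambda>n. 1/L^n*(an n - a) - 1/L^n*(lB n - ln (Bf 0)) + (l n/L)^n * p n - ((l n/L)^n * an n - a) + E n/L^n = Q2 n) sequentially"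
      using ev_W
    proof eventually_elim
      case (elim n)
      show ?case unfolding Q2_def K_def power_divide
        by (rule alg2[symmetric]) (use L0 elim in auto)
    qed
    ultimately show ?thesis by (rule Lim_transform_eventually)
  qed
  have WK: "(\<lambda>n. (W n - K)/L^n) \<longlonglongrightarrow> - a"
  proof -
    have "(\<lambda>n. Q2 n - a) \<longlonglongrightarrow> 0 - a" by (intro tendsto_intros Q2lim)
    moreover have "Q2 n - a = (W n - K)/L^n" for n unfolding Q2_def using L0 by (simp add: field_simps)
    ultimately show ?thesis by simp
  qed
  define Q1 where "Q1 = (\<lambda>n. (ln (W n) - ln K - (W n - K)/K)/L^n)"
  have Wrat: "(\<lambda>n. W n / K - 1) \<longlonglongrightarrow> 0"
  proof -
    have "(\<lambda>n. W n / K - 1) \<longlonglongrightarrow> K / K - 1" by (intro tendsto_intros Wlim) (use Kp in simp)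
    thus ?thesis using Kp by simp
  qed
  have ev_half: "eventually (\<lambda>n. \<bar>W n / K - 1\<bar> < 1/2) sequentially"
    using order_tendstoD(2)[OF tendsto_rabs_zero[OF Wrat], of "1/2"] by simp
  have Q1lim: "Q1 \<longlonglongrightarrow> 0"
  proof (rule comp0)
    have "(\<lambda>n. 2/K^2 * ((W n - K)/L^n)^2 * L^n) \<longlonglongrightarrow> 2/K^2 * (-a)^2 * 0"
      by (intro tendsto_intros WK Lp0)
    thus "(\<lambda>n. 2/K^2 * ((W n - K)/L^n)^2 * L^n) \<longlonglongrightarrow> 0" by simp
    show "eventually (\<lambda>n. \<bar>Q1 n\<bar> \<le> 2/K^2 * ((W n - K)/L^n)^2 * L^n) sequentially"
      using ev_half ev_WK
    proof eventually_elim
      case (elim n)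
      have Wp: "W n > 0" using elim Kp by linarith
      have e1: "ln (W n) - ln K - (W n - K)/K = ln (1 + (W n/K - 1)) - (W n/K - 1)"
        using Wp Kp by (simp add: ln_div diff_divide_distrib)
      have "\<bar>ln (1 + (W n/K - 1)) - (W n/K - 1)\<bar> \<le> 2 * (W n/K - 1)^2"
        using elim by (intro abs_ln_one_plus_x_minus_x_bound) simp
      hence "\<bar>Q1 n\<bar> \<le> 2 * (W n/K - 1)^2 / L^n"
        unfolding Q1_def abs_divide e1 using Ln[of n] by (simp add: divide_right_mono)
      also have "2 * (W n/K - 1)^2 / L^n = 2/K^2 * ((W n - K)/L^n)^2 * L^n"
        using Kp L0 by (simp add: field_simps power2_eq_square)
      finally show ?case .
    qed
  qed
  have alg3: "(lW - lK - (Wv-K)/K)/Ln + ((Wv - K + a*Ln)/Ln)/K - nn/Ln*(ll - lL)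
      = ((lW - nn*ll) - (-nn*lL + lK + (- inverse K * a)*Ln))/Ln"
    if "Ln \<noteq> 0" "K \<noteq> 0" for lW lK Wv Ln nn ll lL :: real
    using that by (simp add: field_simps)
  have fin: "(\<lambda>n. Q1 n + Q2 n / K - real n/L^n * (ln (l n) - ln L)) \<longlonglongrightarrow> 0 + 0 / K - 0"
    by (intro tendsto_intros Q1lim Q2lim Dl) (use Kp in simp)
  have ev_fin: "eventually (\<lambda>n. Q1 n + Q2 n / K - real n/L^n * (ln (l n) - ln L)
      = (ln (- ln (eps n)) - (- real n * ln L + ln K + (- inverse K * a) * L ^ n)) / L^n) sequentially"
    using ev_WK ev_lpos
  proof eventually_elim
    case (elim n)
    have Wp: "W n > 0" using elim Kp by linarith
    have lp: "l n ^ n > 0" using elim by simp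
    have "- ln (eps n) = W n / l n ^ n" unfolding W_def using elim(2) by simp
    hence hT: "ln (- ln (eps n)) = ln (W n) - real n * ln (l n)"
      using Wp lp elim by (simp add: ln_div ln_realpow)
    show ?case unfolding hT Q1_def Q2_def
      by (rule alg3) (use L0 Kp in auto)
  qed
  have "(\<lambda>n. (ln (- ln (eps n)) - (- real n * ln L + ln K + (- inverse K * a) * L ^ n)) / L^n) \<longlonglongrightarrow> 0"
    using Lim_transform_eventually[OF fin ev_fin] by simp
  hence "(\<lambda>n. ln (- ln (eps n)) - (- real n * ln L + ln K + (- inverse K * a) * L ^ n)) \<in> o(\<lambda>n. L ^ n)"
    by (rule smalloI_tendsto) (use L0 in \<open>simp add: always_eventually\<close>)
  thus ?thesis unfolding L_def[symmetric] a_def[symmetric] K_def[symmetric] .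
qed
end
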